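(* Let $n\ge1$, let $\mathcal{S}$ be a discrete subgroup of $O(n+1)$ satisfying the spanning property, let $q\neq0$, and let $\Omega^{(-\infty,q)}$ be a maximizer over $\mathcal{K}_0(\mathcal{S})$ of $$\mathcal{F}_{-\infty,q}(\Omega)=V_q(\Omega)\big/\big(\min_{\mathbb{S}^n}h_\Omega\big)^q.$$ (1) If $q>0$, then $\Omega^{(-\infty,q)}$ is an $\mathcal{S}$-invariant polytope. (2) If $q<0$, then $\Omega^{(-\infty,q)}$ is a ball $B_R\subset\mathbb{R}^{n+1}$ for some $R>0$.
   Context: $\mathcal{K}_0(\mathcal{S})$: convex bodies in $\mathbb{R}^{n+1}$ containing the origin and invariant under all $\phi\in\mathcal{S}$; $h_\Omega$ support function; $r_\Omega(y)=\sup\{\lambda>0:\lambda y\in\Omega\}$ radial function; $V_q(\Omega)=\int_{\mathbb{S}^n}r_\Omega^q(y)\,dy$. Spanning property: for every $a\in\mathbb{S}^n$, $\mathrm{conv}\{\phi(a):\phi\in\mathcal{S}\}$ is a non-degenerate $(n+1)$-dimensional polytope. *)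

theory Defs
  imports "HOL-Analysis.Analysis"
begin

definition orth_subgroup :: "('a::euclidean_space \<Rightarrow> 'a) set \<Rightarrow> bool" where
  "orth_subgroup S \<longleftrightarrow>
     (\<forall>\<phi>\<in>S. orthogonal_transformation \<phi>) \<and> id \<in> S \<and>
     (\<forall>\<phi>\<in>S. \<forall>\<psi>\<in>S. \<phi> \<circ> \<psi> \<in> S) \<and> (\<forall>\<phi>\<in>S. inv \<phi> \<in> S)"

text \<open>Discreteness with respect to the operator norm topology on O(n+1):
  every element has a neighbourhood containing no other element of S.\<close>
definition discrete_orth :: "('a::euclidean_space \<Rightarrow> 'a) set \<Rightarrow> bool" where
  "discrete_orth S \<longleftrightarrow>
     (\<forall>\<phi>\<in>S. \<exists>e>0. \<forall>\<psi>\<in>S. \<psi> \<noteq> \<phi> \<longrightarrow> (\<exists>x. norm x = 1 \<and> e \<le> norm (\<phi> x - \<psi> x)))"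

definition spanning_property :: "('a::euclidean_space \<Rightarrow> 'a) set \<Rightarrow> bool" where
  "spanning_property S \<longleftrightarrow>
     (\<forall>a\<in>sphere 0 1. polytope (convex hull ((\<lambda>\<phi>. \<phi> a) ` S)) \<and>
        aff_dim (convex hull ((\<lambda>\<phi>. \<phi> a) ` S)) = int DIM('a))"

definition K0 :: "('a::euclidean_space \<Rightarrow> 'a) set \<Rightarrow> 'a set set" where
  "K0 S = {\<Omega>. compact \<Omega> \<and> convex \<Omega> \<and> interior \<Omega> \<noteq> {} \<and> 0 \<in> \<Omega> \<and>
                (\<forall>\<phi>\<in>S. \<phi> ` \<Omega> = \<Omega>)}"

definition support_fun :: "'a::euclidean_space set \<Rightarrow> 'a \<Rightarrow> real" where
  "support_fun \<Omega> u = (SUP x\<in>\<Omega>. x \<bullet> u)"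

definition radial_fun :: "'a::euclidean_space set \<Rightarrow> 'a \<Rightarrow> real" where
  "radial_fun \<Omega> y = Sup {t::real. t > 0 \<and> t *\<^sub>R y \<in> \<Omega>}"

text \<open>Integral over the unit sphere S^n w.r.t. the spherical Lebesgue measure, expressed via
  the polar-coordinate (cone measure) identity
  \<open>\<integral>_{S^n} f d\<sigma> = (n+1) \<integral>_{B_1} f(x/|x|) dx\<close>.\<close>
definition sphere_integral :: "('a::euclidean_space \<Rightarrow> real) \<Rightarrow> real" where
  "sphere_integral f = real DIM('a) * (LINT x : ball 0 1 | lborel. f (x /\<^sub>R norm x))"

definition Vq :: "real \<Rightarrow> 'a::euclidean_space set \<Rightarrow> real" where
  "Vq q \<Omega> = sphere_integral (\<lambda>y. radial_fun \<Omega> y powr q)"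

definition F_minf :: "real \<Rightarrow> 'a::euclidean_space set \<Rightarrow> real" where
  "F_minf q \<Omega> = Vq q \<Omega> / (Inf (support_fun \<Omega> ` sphere 0 1)) powr q"

end

theory Submission
  imports Defs
begin


lemma orth_inner:
  fixes \<phi> :: "'a::euclidean_space \<Rightarrow> 'a"
  assumes "orthogonal_transformation \<phi>"
  shows "\<phi> x \<bullet> y = x \<bullet> inv \<phi> y"
proof -
  have "\<phi> (inv \<phi> y) = y" using orthogonal_transformation_surj[OF assms] by (simp add: surj_f_inv_f)
  then have "\<phi> x \<bullet> y = \<phi> x \<bullet> \<phi> (inv \<phi> y)" by simp
  also have "\<dots> = x \<bullet> inv \<phi> y" using assms unfolding orthogonal_transformation_def by blast
  finally show ?thesis .
qed

lemma orbit_sphere: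
  fixes S :: "('a::euclidean_space \<Rightarrow> 'a) set"
  assumes "orth_subgroup S" "a \<in> sphere 0 1"
  shows "(\<lambda>\<phi>. \<phi> a) ` S \<subseteq> sphere 0 1"
  using assms by (auto simp: orth_subgroup_def orthogonal_transformation_norm)

lemma orbit_finite:
  fixes S :: "('a::euclidean_space \<Rightarrow> 'a) set"
  assumes "orth_subgroup S" "spanning_property S" "a \<in> sphere 0 1"
  shows "finite ((\<lambda>\<phi>. \<phi> a) ` S)"
proof -
  define Orb where "Orb = (\<lambda>\<phi>. \<phi> a) ` S"
  have Os: "Orb \<subseteq> sphere 0 1" using orbit_sphere[OF assms(1,3)] Orb_def by simp
  have "polytope (convex hull Orb)" using assms(2,3) unfolding spanning_property_def Orb_def by blast
  then obtain F where F: "finite F" "convex hull Orb = convex hull F" unfolding polytope_def by blast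
  have hc: "convex hull Orb \<subseteq> cball 0 1"
    using Os by (intro hull_minimal) auto
  have "b \<in> F" if b: "b \<in> Orb" for b
  proof -
    have nb: "norm b = 1" using b Os by auto
    have le: "b \<bullet> x \<le> 1" if "x \<in> convex hull Orb" for x
    proof -
      have "norm x \<le> 1" using hc that by auto
      then have "b \<bullet> x \<le> norm b * norm x" using norm_cauchy_schwarz by blast
      then show ?thesis using nb \<open>norm x \<le> 1\<close> by simp
    qed
    have face: "(convex hull Orb \<inter> {x. b \<bullet> x = 1}) face_of convex hull Orb"
      by (rule face_of_Int_supporting_hyperplane_le) (auto intro: le)
    have eq: "convex hull Orb \<inter> {x. b \<bullet> x = 1} = {b}"
    proof
      show "{b} \<subseteq> convex hull Orb \<inter> {x. b \<bullet> x = 1}"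
        using b hull_subset[of Orb convex] nb by (auto simp: dot_square_norm)
      show "convex hull Orb \<inter> {x. b \<bullet> x = 1} \<subseteq> {b}"
      proof
        fix x assume x: "x \<in> convex hull Orb \<inter> {x. b \<bullet> x = 1}"
        then have "norm x \<le> 1" using hc by auto
        have "(norm (x - b))\<^sup>2 = (norm x)\<^sup>2 - 2 * (b \<bullet> x) + (norm b)\<^sup>2"
          by (simp add: power2_norm_eq_inner inner_diff_left inner_diff_right inner_commute)
        also have "\<dots> \<le> 0" using x nb \<open>norm x \<le> 1\<close>
          by (simp add: power_le_one)
        finally have "x = b" by simp
        then show "x \<in> {b}" by simp
      qed
    qed
    have "b extreme_point_of convex hull Orb"
      using face eq face_of_singleton by metis
    then have "b extreme_point_of convex hull F" using F by simp
    then show ?thesis by (rule extreme_point_of_convex_hull)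
  qed
  then have "Orb \<subseteq> F" by blast
  then show ?thesis using F finite_subset Orb_def by blast
qed

lemma orbit_perm:
  fixes S :: "('a::euclidean_space \<Rightarrow> 'a) set"
  assumes "orth_subgroup S" "\<phi> \<in> S"
  shows "\<phi> ` ((\<lambda>\<psi>. \<psi> a) ` S) = (\<lambda>\<psi>. \<psi> a) ` S"
proof
  show "\<phi> ` (\<lambda>\<psi>. \<psi> a) ` S \<subseteq> (\<lambda>\<psi>. \<psi> a) ` S"
    using assms unfolding orth_subgroup_def by (auto intro!: image_eqI[where x="\<phi> \<circ> _"])
  show "(\<lambda>\<psi>. \<psi> a) ` S \<subseteq> \<phi> ` (\<lambda>\<psi>. \<psi> a) ` S"
  proof
    fix y assume "y \<in> (\<lambda>\<psi>. \<psi> a) ` S"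
    then obtain \<psi> where p: "\<psi> \<in> S" "y = \<psi> a" by auto
    have o: "orthogonal_transformation \<phi>" using assms unfolding orth_subgroup_def by blast
    have "inv \<phi> \<circ> \<psi> \<in> S" using assms p unfolding orth_subgroup_def by blast
    moreover have "y = \<phi> ((inv \<phi> \<circ> \<psi>) a)"
      using orthogonal_transformation_surj[OF o] p by (simp add: surj_f_inv_f)
    ultimately show "y \<in> \<phi> ` (\<lambda>\<psi>. \<psi> a) ` S" by blast
  qed
qed

lemma no_fixed:
  fixes S :: "('a::euclidean_space \<Rightarrow> 'a) set"
  assumes "orth_subgroup S" "spanning_property S" "\<forall>\<phi>\<in>S. \<phi> v = v"
  shows "v = 0"
proof (rule ccontr)
  assume v: "v \<noteq> 0"
  define a where "a = v /\<^sub>R norm v"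
  have as: "a \<in> sphere 0 1" using v by (simp add: a_def)
  have "\<phi> a = a" if "\<phi> \<in> S" for \<phi>
    using assms(1,3) that unfolding orth_subgroup_def a_def
    by (simp add: orthogonal_transformation_scaleR)
  then have i1: "(\<lambda>\<phi>. \<phi> a) ` S = (\<lambda>\<phi>. a) ` S"
    by (intro image_cong) auto
  have "id \<in> S" using assms(1) unfolding orth_subgroup_def by blast
  then have "S \<noteq> {}" by blast
  with i1 have "(\<lambda>\<phi>. \<phi> a) ` S = {a}" by (simp add: image_constant_conv)
  then have "aff_dim (convex hull ((\<lambda>\<phi>. \<phi> a) ` S)) = 0" by simp
  moreover have "aff_dim (convex hull ((\<lambda>\<phi>. \<phi> a) ` S)) = int DIM('a)"
    using assms(2) as unfolding spanning_property_def by blast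
  ultimately show False by simp
qed

lemma zero_interior:
  fixes S :: "('a::euclidean_space \<Rightarrow> 'a) set"
  assumes G: "orth_subgroup S" and sp: "spanning_property S" and K: "\<Omega> \<in> K0 S"
  shows "0 \<in> interior \<Omega>"
proof (rule ccontr)
  assume n0: "0 \<notin> interior \<Omega>"
  have Kc: "compact \<Omega>" "convex \<Omega>" "interior \<Omega> \<noteq> {}" "0 \<in> \<Omega>" "\<forall>\<phi>\<in>S. \<phi> ` \<Omega> = \<Omega>"
    using K unfolding K0_def by auto
  have "rel_interior \<Omega> = interior \<Omega>" using Kc(3) by (rule rel_interior_nonempty_interior)
  then have "0 \<notin> rel_interior \<Omega>" using n0 by simp
  moreover have "0 \<in> closure \<Omega>" using Kc(4) closure_subset by blast
  ultimately obtain a where a: "a \<noteq> 0" "\<And>y. y \<in> closure \<Omega> \<Longrightarrow> a \<bullet> 0 \<le> a \<bullet> y"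
    using supporting_hyperplane_relative_frontier[OF Kc(2)] by metis
  define u where "u = a /\<^sub>R norm a"
  have us: "u \<in> sphere 0 1" using a(1) by (simp add: u_def)
  have au: "0 \<le> u \<bullet> y" if "y \<in> \<Omega>" for y
    using a(2)[of y] that closure_subset[of \<Omega>] a(1) by (auto simp: u_def)
  define Orb where "Orb = (\<lambda>\<phi>. \<phi> u) ` S"
  have fin: "finite Orb" using orbit_finite[OF G sp us] Orb_def by simp
  define v where "v = (\<Sum>w\<in>Orb. w)"
  have "\<forall>\<phi>\<in>S. \<phi> v = v"
  proof
    fix \<phi> assume ph: "\<phi> \<in> S"
    then have o: "orthogonal_transformation \<phi>" using G unfolding orth_subgroup_def by blast
    have "\<phi> v = (\<Sum>w\<in>Orb. \<phi> w)" unfolding v_def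
      using orthogonal_transformation_linear[OF o] by (simp add: linear_sum)
    also have "\<dots> = (\<Sum>w\<in>\<phi> ` Orb. w)"
      using orthogonal_transformation_inj[OF o] by (simp add: sum.reindex inj_on_def inj_def)
    also have "\<phi> ` Orb = Orb" unfolding Orb_def by (rule orbit_perm[OF G ph])
    finally show "\<phi> v = v" unfolding v_def .
  qed
  then have v0: "v = 0" using no_fixed[OF G sp] by blast
  have xw: "0 \<le> x \<bullet> w" if xO: "x \<in> \<Omega>" and wO: "w \<in> Orb" for x w
  proof -
    obtain \<psi> where p: "\<psi> \<in> S" "w = \<psi> u" using wO Orb_def by auto
    have o: "orthogonal_transformation \<psi>" using G p unfolding orth_subgroup_def by blast
    have "inv \<psi> \<in> S" using G p unfolding orth_subgroup_def by blast
    then have "inv \<psi> x \<in> \<Omega>" using Kc(5) xO by blast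
    then have "0 \<le> u \<bullet> inv \<psi> x" by (rule au)
    also have "u \<bullet> inv \<psi> x = \<psi> u \<bullet> x" using orth_inner[OF o, of u x] by simp
    finally show ?thesis using p by (simp add: inner_commute)
  qed
  have uO: "u \<in> Orb" using G unfolding orth_subgroup_def Orb_def by (auto intro: image_eqI[where x=id])
  have xu: "x \<bullet> u = 0" if "x \<in> \<Omega>" for x
  proof -
    have "(\<Sum>w\<in>Orb. x \<bullet> w) = x \<bullet> v" unfolding v_def by (simp add: inner_sum_right)
    then have "(\<Sum>w\<in>Orb. x \<bullet> w) = 0" using v0 by simp
    then have "\<forall>w\<in>Orb. x \<bullet> w = 0" using sum_nonneg_eq_0_iff[OF fin] xw[OF that] by blast
    then show ?thesis using uO by blast
  qed
  obtain p where "p \<in> interior \<Omega>" using Kc(3) by blast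
  then obtain e where e: "e > 0" "ball p e \<subseteq> \<Omega>" using mem_interior by blast
  have "p \<in> \<Omega>" "p + (e/2) *\<^sub>R u \<in> \<Omega>" using e us by (auto intro!: subsetD[OF e(2)] simp: dist_norm)
  then have "p \<bullet> u = 0" "(p + (e/2) *\<^sub>R u) \<bullet> u = 0" using xu by auto
  then have "(e/2) * (u \<bullet> u) = 0" by (simp add: inner_add_left)
  then show False using e us by (simp add: dot_square_norm)
qed



lemma radial_props:
  fixes K :: "'a::euclidean_space set"
  assumes cK: "compact K" and vK: "convex K" and e: "e > 0" "ball 0 e \<subseteq> K" and y: "y \<noteq> 0"
  shows "0 < radial_fun K y" "radial_fun K y *\<^sub>R y \<in> K"
    "\<And>t. 0 < t \<Longrightarrow> t *\<^sub>R y \<in> K \<longleftrightarrow> t \<le> radial_fun K y"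
proof -
  define T where "T = {t::real. t > 0 \<and> t *\<^sub>R y \<in> K}"
  have r: "radial_fun K y = Sup T" unfolding radial_fun_def T_def ..
  obtain B where B: "B > 0" "\<forall>x\<in>K. norm x \<le> B"
    using compact_imp_bounded[OF cK] bounded_pos by blast
  have bdd: "bdd_above T"
  proof (rule bdd_aboveI)
    fix t assume "t \<in> T"
    then have "norm (t *\<^sub>R y) \<le> B" "t > 0" using B T_def by auto
    then have "t * norm y \<le> B" by simp
    then show "t \<le> B / norm y" using y by (simp add: field_simps)
  qed
  define t0 where "t0 = e / (2 * norm y)"
  have t0: "t0 > 0" using e y by (simp add: t0_def)
  have "norm (t0 *\<^sub>R y) = e/2" using y e by (simp add: t0_def)
  then have "t0 *\<^sub>R y \<in> K" using e by (intro subsetD[OF e(2)]) simp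
  then have t0T: "t0 \<in> T" using t0 T_def by simp
  then have "T \<noteq> {}" by blast
  have "t0 \<le> Sup T" by (rule cSup_upper[OF t0T bdd])
  then show pos: "0 < radial_fun K y" using t0 r by simp
  have "closed ((\<lambda>t::real. t *\<^sub>R y) -` K)"
    by (intro closed_vimage compact_imp_closed cK continuous_intros)
  then have "closed {t::real. t *\<^sub>R y \<in> K}" by (simp add: vimage_def)
  moreover have "Sup T \<in> closure T" by (rule closure_contains_Sup[OF \<open>T \<noteq> {}\<close> bdd])
  moreover have "T \<subseteq> {t::real. t *\<^sub>R y \<in> K}" using T_def by auto
  ultimately have "Sup T \<in> {t::real. t *\<^sub>R y \<in> K}" using closure_minimal by blast
  then show mem: "radial_fun K y *\<^sub>R y \<in> K" using r by simp
  fix t :: real assume tp: "0 < t"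
  show "t *\<^sub>R y \<in> K \<longleftrightarrow> t \<le> radial_fun K y"
  proof
    assume "t *\<^sub>R y \<in> K"
    then have "t \<in> T" using tp T_def by simp
    then show "t \<le> radial_fun K y" using r cSup_upper[OF _ bdd] by simp
  next
    assume le: "t \<le> radial_fun K y"
    have "0 \<in> K" using e by auto
    have "(t / radial_fun K y) *\<^sub>R (radial_fun K y *\<^sub>R y) + (1 - t / radial_fun K y) *\<^sub>R 0 \<in> K"
      using convexD[OF vK mem \<open>0 \<in> K\<close>, of "t / radial_fun K y" "1 - t / radial_fun K y"] pos le tp
      by simp
    then show "t *\<^sub>R y \<in> K" using pos by simp
  qed
qed

lemma radial_zero:
  assumes "0 \<in> K1" "0 \<in> K2"
  shows "radial_fun K1 0 = radial_fun K2 0"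
  using assms unfolding radial_fun_def by simp

lemma radial_meas:
  fixes K :: "'a::euclidean_space set"
  assumes cK: "compact K" and vK: "convex K" and e: "e > 0" "ball 0 e \<subseteq> K"
  shows "radial_fun K \<in> borel_measurable borel"
proof (unfold borel_measurable_iff_ge, intro allI)
  fix a :: real
  have eq: "{w \<in> space borel. a \<le> radial_fun K w} =
     ({w. w \<noteq> 0} \<inter> {w. a \<le> 0 \<or> a *\<^sub>R w \<in> K}) \<union> {w. w = 0 \<and> a \<le> radial_fun K 0}"
  proof -
    have "a \<le> radial_fun K w \<longleftrightarrow> (a \<le> 0 \<or> a *\<^sub>R w \<in> K)" if "w \<noteq> 0" for w
    proof (cases "a \<le> 0")
      case True
      then show ?thesis using radial_props(1)[OF cK vK e that] by simp
    next
      case False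
      then show ?thesis using radial_props(3)[OF cK vK e that, of a] by simp
    qed
    then show ?thesis by (intro set_eqI) (case_tac "x = 0"; auto)
  qed
  have s1: "{w::'a. w \<noteq> 0} \<in> sets borel" by (intro borel_open) (simp add: open_Collect_neq)
  have s2: "{w::'a. a \<le> 0 \<or> a *\<^sub>R w \<in> K} \<in> sets borel"
  proof (cases "a \<le> 0")
    case True then show ?thesis by simp
  next
    case False
    have "closed ((\<lambda>w::'a. a *\<^sub>R w) -` K)"
      by (intro closed_vimage compact_imp_closed cK continuous_intros)
    then have "closed {w::'a. a *\<^sub>R w \<in> K}" by (simp add: vimage_def)
    then show ?thesis using False by (simp add: borel_closed)
  qed
  have s3: "{w::'a. w = 0 \<and> a \<le> radial_fun K 0} \<in> sets borel"
  proof (cases "a \<le> radial_fun K 0")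
    case True
    then have "{w::'a. w = 0 \<and> a \<le> radial_fun K 0} = {0}" by auto
    then show ?thesis by simp
  next
    case False then show ?thesis by simp
  qed
  show "{w \<in> space borel. a \<le> radial_fun K w} \<in> sets borel"
    unfolding eq using s1 s2 s3 by blast
qed



lemma radial_unit_bounds:
  fixes K :: "'a::euclidean_space set"
  assumes cK: "compact K" and vK: "convex K" and e: "e > 0" "ball 0 e \<subseteq> K"
    and B: "\<forall>x\<in>K. norm x \<le> B" and y: "norm y = 1"
  shows "e/2 \<le> radial_fun K y" "radial_fun K y \<le> B"
proof -
  have y0: "y \<noteq> 0" using y by auto
  have "(e/2) *\<^sub>R y \<in> K" using e y by (intro subsetD[OF e(2)]) simp
  then show "e/2 \<le> radial_fun K y" using radial_props(3)[OF cK vK e y0, of "e/2"] e by simp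
  have "norm (radial_fun K y *\<^sub>R y) \<le> B" using B radial_props(2)[OF cK vK e y0] by blast
  then show "radial_fun K y \<le> B" using y radial_props(1)[OF cK vK e y0] by simp
qed

lemma g_meas:
  fixes K :: "'a::euclidean_space set"
  assumes cK: "compact K" and vK: "convex K" and e: "e > 0" "ball 0 e \<subseteq> K"
  shows "(\<lambda>x::'a. radial_fun K (x /\<^sub>R norm x) powr q) \<in> borel_measurable borel"
proof -
  have [measurable]: "radial_fun K \<in> borel_measurable borel" by (rule radial_meas[OF assms])
  show ?thesis by measurable
qed

lemma g_int:
  fixes K :: "'a::euclidean_space set"
  assumes cK: "compact K" and vK: "convex K" and e: "e > 0" "ball 0 e \<subseteq> K"
  shows "set_integrable lborel (ball 0 1) (\<lambda>x::'a. radial_fun K (x /\<^sub>R norm x) powr q)"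
proof -
  obtain B where B: "B > 0" "\<forall>x\<in>K. norm x \<le> B"
    using compact_imp_bounded[OF cK] bounded_pos by blast
  define C where "C = \<bar>radial_fun K 0 powr q\<bar> + (e/2) powr q + B powr q"
  have bnd: "norm (radial_fun K (x /\<^sub>R norm x) powr q) \<le> C" for x :: 'a
  proof (cases "x = 0")
    case True then show ?thesis by (simp add: C_def)
  next
    case False
    define y where "y = x /\<^sub>R norm x"
    have y: "norm y = 1" using False by (simp add: y_def)
    note bb = radial_unit_bounds[OF cK vK e B(2) y]
    have "radial_fun K y powr q \<le> (e/2) powr q + B powr q"
    proof (cases "q \<ge> 0")
      case True
      then have "radial_fun K y powr q \<le> B powr q" using bb e by (intro powr_mono2) auto
      then show ?thesis using powr_ge_zero[of "e/2" q] powr_ge_zero[of B q] by linarith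
    next
      case False
      then have "radial_fun K y powr q \<le> (e/2) powr q" using bb e by (intro powr_mono2') auto
      then show ?thesis using powr_ge_zero[of "e/2" q] powr_ge_zero[of B q] by linarith
    qed
    then have "radial_fun K y powr q \<le> C"
      unfolding C_def using abs_ge_zero[of "radial_fun K 0 powr q"] by linarith
    then show ?thesis unfolding y_def by simp
  qed
  show ?thesis unfolding set_integrable_def
  proof (rule integrableI_bounded_set_indicator[where B=C])
    show "(\<lambda>x::'a. radial_fun K (x /\<^sub>R norm x) powr q) \<in> borel_measurable lborel"
      using g_meas[OF assms] by simp
    show "emeasure lborel (ball (0::'a) 1) < \<infinity>" by (rule emeasure_lborel_ball_finite)
    show "AE x in lborel. x \<in> ball 0 1 \<longrightarrow> norm (radial_fun K (x /\<^sub>R norm x) powr q) \<le> C"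
      using bnd by (intro AE_I2) blast
  qed simp
qed

lemma int_strict:
  fixes f g :: "'a::euclidean_space \<Rightarrow> real"
  assumes f: "integrable lborel f" and g: "integrable lborel g"
    and le: "\<And>x. f x \<le> g x" and lt: "\<And>x. x \<in> ball c d \<Longrightarrow> f x < g x" and d: "d > 0"
  shows "integral\<^sup>L lborel f < integral\<^sup>L lborel g"
proof (rule ccontr)
  assume nt: "\<not> ?thesis"
  have ig: "integrable lborel (\<lambda>x. g x - f x)" using g f by (rule Bochner_Integration.integrable_diff)
  have eqd: "integral\<^sup>L lborel (\<lambda>x. g x - f x) = integral\<^sup>L lborel g - integral\<^sup>L lborel f"
    using g f by (rule Bochner_Integration.integral_diff)
  have nn: "AE x in lborel. 0 \<le> g x - f x" using le by (intro AE_I2) (simp add: diff_ge_0_iff_ge)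
  have "0 \<le> integral\<^sup>L lborel (\<lambda>x. g x - f x)"
    using nn by (rule integral_nonneg_AE)
  then have "integral\<^sup>L lborel (\<lambda>x. g x - f x) = 0" using eqd nt by linarith
  then have ae: "AE x in lborel. g x - f x = 0"
    using integral_nonneg_eq_0_iff_AE[OF ig nn] by blast
  have "AE x in lborel. x \<notin> ball c d"
    using ae by (rule eventually_mono) (use lt in fastforce)
  then have "emeasure lborel (ball c d) = 0"
    using AE_iff_measurable[of "ball c d" lborel "\<lambda>x. x \<notin> ball c d"] by (simp add: ball_def)
  moreover have "measure lborel (ball c d) > 0" using d by (rule content_ball_pos)
  ultimately show False by (simp add: measure_def)
qed



lemma cone_ball:
  fixes K1 K2 :: "'a::euclidean_space set"
  assumes c1: "compact K1" "convex K1" and c2: "compact K2" "convex K2"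
    and e: "e > 0" "ball 0 e \<subseteq> K1" and sub: "K1 \<subseteq> K2" and ne: "K1 \<noteq> K2"
  obtains c d where "d > 0"
    "\<And>z. z \<in> ball c d \<Longrightarrow> norm z < 1 \<and> z \<noteq> 0 \<and>
        radial_fun K1 (z /\<^sub>R norm z) < radial_fun K2 (z /\<^sub>R norm z)"
proof -
  have e2: "ball 0 e \<subseteq> K2" using e sub by blast
  obtain x0 where x0: "x0 \<in> K2" "x0 \<notin> K1" using sub ne by blast
  have "open (- K1)" using compact_imp_closed[OF c1(1)] by (simp add: open_Compl)
  then obtain d0 where d0: "d0 > 0" "ball x0 d0 \<subseteq> - K1" using x0(2) open_contains_ball by blast
  define s where "s = min (1/2) (d0 / (2 * (norm x0 + 1)))"
  have dpos: "d0 / (2 * (norm x0 + 1)) > 0" using d0 by (intro divide_pos_pos) (auto simp: add_nonneg_pos)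
  have s1: "s > 0" using dpos unfolding s_def by simp
  have s2: "s \<le> 1/2" unfolding s_def by (rule min.cobounded1)
  note s = s1 s2
  have "s * norm x0 \<le> (d0 / (2 * (norm x0 + 1))) * norm x0"
    by (intro mult_right_mono) (auto simp: s_def)
  also have "\<dots> = d0 / 2 * (norm x0 / (norm x0 + 1))"
    by (simp add: field_simps)
  also have "\<dots> < d0 / 2 * 1"
  proof (rule mult_strict_left_mono)
    have "0 < norm x0 + 1" by (simp add: add_nonneg_pos)
    then show "norm x0 / (norm x0 + 1) < 1" by (simp add: divide_less_eq_1)
  qed (use d0 in simp)
  also have "\<dots> = d0 / 2" by simp
  finally have sx: "s * norm x0 < d0 / 2" .
  define p where "p = (1 - s) *\<^sub>R x0"
  define \<delta> where "\<delta> = min (s * e) (d0 / 2)"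
  have \<delta>: "\<delta> > 0" using s e d0 by (simp add: \<delta>_def)
  have inK2: "z \<in> K2" if z: "z \<in> ball p \<delta>" for z
  proof -
    define w where "w = (1 / s) *\<^sub>R (z - p)"
    have "norm w = norm (z - p) / s" using s by (simp add: w_def)
    also have "norm (z - p) < s * e" using z by (simp add: dist_norm norm_minus_commute \<delta>_def)
    then have "norm (z - p) / s < e" using s by (simp add: field_simps)
    finally have "w \<in> K2" using e2 by auto
    then have "(1 - s) *\<^sub>R x0 + s *\<^sub>R w \<in> K2" using convexD[OF c2(2) x0(1)] s by simp
    moreover have "(1 - s) *\<^sub>R x0 + s *\<^sub>R w = z" using s by (simp add: w_def p_def)
    ultimately show ?thesis by simp
  qed
  have notK1: "z \<notin> K1" if z: "z \<in> ball p \<delta>" for z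
  proof -
    have "dist x0 p = s * norm x0" using s by (simp add: p_def dist_norm algebra_simps)
    then have "dist x0 z \<le> s * norm x0 + dist p z" by (metis dist_triangle)
    also have "dist p z < d0 / 2" using z by (simp add: \<delta>_def)
    finally have "dist x0 z < d0" using sx by linarith
    then show ?thesis using d0 by auto
  qed
  define c where "c = 1 / (norm p + \<delta>)"
  have c: "c > 0" using \<delta> by (simp add: c_def add_nonneg_pos)
  show ?thesis
  proof (rule that[of "c * \<delta>" "c *\<^sub>R p"])
    show "c * \<delta> > 0" using c \<delta> by simp
    fix z assume z: "z \<in> ball (c *\<^sub>R p) (c * \<delta>)"
    define z' where "z' = (1/c) *\<^sub>R z"
    have zz: "z = c *\<^sub>R z'" using c by (simp add: z'_def)
    have e1: "c *\<^sub>R p - z = c *\<^sub>R (p - z')" using c by (simp add: z'_def algebra_simps)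
    have "dist (c *\<^sub>R p) z = c * dist p z'"
      unfolding dist_norm e1 using c by simp
    then have "dist p z' = dist (c *\<^sub>R p) z / c" using c by (simp add: field_simps)
    also have "\<dots> < \<delta>" using z c by (simp add: field_simps mult.commute)
    finally have z'b: "z' \<in> ball p \<delta>" by simp
    have z'K2: "z' \<in> K2" and z'K1: "z' \<notin> K1" using inK2[OF z'b] notK1[OF z'b] by auto
    have "0 \<in> K1" using e by (auto intro: subsetD[OF e(2)])
    then have z'0: "z' \<noteq> 0" using z'K1 by auto
    have "norm z' < norm p + \<delta>" using z'b norm_triangle_sub[of z' p]
      by (smt (verit, best) dist_norm mem_ball norm_minus_commute)
    then have "norm z < 1" using c \<delta> by (simp add: zz c_def field_simps)
    moreover have z0: "z \<noteq> 0" using zz c z'0 by simp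
    moreover have dir: "z /\<^sub>R norm z = z' /\<^sub>R norm z'" using c by (simp add: zz)
    define y where "y = z' /\<^sub>R norm z'"
    have y0: "y \<noteq> 0" using z'0 by (simp add: y_def)
    have zy: "norm z' *\<^sub>R y = z'" using z'0 by (simp add: y_def)
    have "norm z' \<le> radial_fun K2 y"
      using radial_props(3)[OF c2 e(1) e2 y0, of "norm z'"] z'0 zy z'K2 by simp
    moreover have "\<not> norm z' \<le> radial_fun K1 y"
      using radial_props(3)[OF c1 e(1) e(2) y0, of "norm z'"] z'0 zy z'K1 by simp
    ultimately show "norm z < 1 \<and> z \<noteq> 0 \<and>
        radial_fun K1 (z /\<^sub>R norm z) < radial_fun K2 (z /\<^sub>R norm z)"
      using dir y_def by simp
  qed
qed



lemma radial_mono_pt: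
  fixes K1 K2 :: "'a::euclidean_space set"
  assumes c1: "compact K1" "convex K1" and c2: "compact K2" "convex K2"
    and e: "e > 0" "ball 0 e \<subseteq> K1" and sub: "K1 \<subseteq> K2" and x: "x \<noteq> 0"
  shows "0 < radial_fun K1 x" "radial_fun K1 x \<le> radial_fun K2 x"
proof -
  have e2: "ball 0 e \<subseteq> K2" using e sub by blast
  show "0 < radial_fun K1 x" by (rule radial_props(1)[OF c1 e x])
  then show "radial_fun K1 x \<le> radial_fun K2 x"
    using radial_props(2)[OF c1 e x] radial_props(3)[OF c2 e(1) e2 x, of "radial_fun K1 x"] sub by blast
qed

lemma strict_radial:
  fixes K1 K2 :: "'a::euclidean_space set"
  assumes c1: "compact K1" "convex K1" and c2: "compact K2" "convex K2"
    and e: "e > 0" "ball 0 e \<subseteq> K1" and sub: "K1 \<subseteq> K2" and ne: "K1 \<noteq> K2"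
  shows "q > 0 \<Longrightarrow> (LINT x : ball 0 1 | lborel. radial_fun K1 (x /\<^sub>R norm x) powr q)
                   < (LINT x : ball 0 1 | lborel. radial_fun K2 (x /\<^sub>R norm x) powr q)"
    and "q < 0 \<Longrightarrow> (LINT x : ball 0 1 | lborel. radial_fun K2 (x /\<^sub>R norm x) powr q)
                   < (LINT x : ball 0 1 | lborel. radial_fun K1 (x /\<^sub>R norm x) powr q)"
proof -
  have e2: "ball 0 e \<subseteq> K2" using e sub by blast
  have z1: "0 \<in> K1" "0 \<in> K2" using e e2 by (auto intro: subsetD[OF e(2)] subsetD[OF e2])
  define g1 where "g1 = (\<lambda>x::'a. indicator (ball 0 1) x *\<^sub>R radial_fun K1 (x /\<^sub>R norm x) powr q)"
  define g2 where "g2 = (\<lambda>x::'a. indicator (ball 0 1) x *\<^sub>R radial_fun K2 (x /\<^sub>R norm x) powr q)"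
  have i1: "integrable lborel g1" using g_int[OF c1 e, of q] unfolding set_integrable_def g1_def .
  have i2: "integrable lborel g2" using g_int[OF c2 e(1) e2, of q] unfolding set_integrable_def g2_def .
  have I1: "(LINT x : ball 0 1 | lborel. radial_fun K1 (x /\<^sub>R norm x) powr q) = integral\<^sup>L lborel g1"
    unfolding set_lebesgue_integral_def g1_def ..
  have I2: "(LINT x : ball 0 1 | lborel. radial_fun K2 (x /\<^sub>R norm x) powr q) = integral\<^sup>L lborel g2"
    unfolding set_lebesgue_integral_def g2_def ..
  obtain c d where d: "d > 0" and cd: "\<And>z. z \<in> ball c d \<Longrightarrow> norm z < 1 \<and> z \<noteq> 0 \<and>
        radial_fun K1 (z /\<^sub>R norm z) < radial_fun K2 (z /\<^sub>R norm z)"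
    using cone_ball[OF c1 c2 e sub ne] by blast
  have pt: "(x = 0 \<and> radial_fun K1 (x /\<^sub>R norm x) = radial_fun K2 (x /\<^sub>R norm x)) \<or>
      (0 < radial_fun K1 (x /\<^sub>R norm x) \<and> radial_fun K1 (x /\<^sub>R norm x) \<le> radial_fun K2 (x /\<^sub>R norm x))"
    for x :: 'a
  proof (cases "x = 0")
    case True then show ?thesis using radial_zero[OF z1] by simp
  next
    case False
    then have "x /\<^sub>R norm x \<noteq> 0" by simp
    then show ?thesis using radial_mono_pt[OF c1 c2 e sub] by blast
  qed
  {
    assume q: "q > 0"
    have "integral\<^sup>L lborel g1 < integral\<^sup>L lborel g2"
    proof (rule int_strict[OF i1 i2 _ _ d])
      fix x :: 'a
      show "g1 x \<le> g2 x"
        using pt[of x] q unfolding g1_def g2_def indicator_def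
        by (auto intro: powr_mono2)
    next
      fix x :: 'a assume "x \<in> ball c d"
      note h = cd[OF this]
      then have "radial_fun K1 (x /\<^sub>R norm x) powr q < radial_fun K2 (x /\<^sub>R norm x) powr q"
        using pt[of x] q by (intro powr_less_mono2) auto
      then show "g1 x < g2 x" using h unfolding g1_def g2_def by simp
    qed
    then show "(LINT x : ball 0 1 | lborel. radial_fun K1 (x /\<^sub>R norm x) powr q)
                   < (LINT x : ball 0 1 | lborel. radial_fun K2 (x /\<^sub>R norm x) powr q)"
      using I1 I2 by simp
  }
  {
    assume q: "q < 0"
    have "integral\<^sup>L lborel g2 < integral\<^sup>L lborel g1"
    proof (rule int_strict[OF i2 i1 _ _ d])
      fix x :: 'a
      show "g2 x \<le> g1 x"
        using pt[of x] q unfolding g1_def g2_def indicator_def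
        by (auto intro: powr_mono2')
    next
      fix x :: 'a assume "x \<in> ball c d"
      note h = cd[OF this]
      then have "radial_fun K2 (x /\<^sub>R norm x) powr q < radial_fun K1 (x /\<^sub>R norm x) powr q"
        using pt[of x] q by (intro powr_less_mono2_neg) auto
      then show "g2 x < g1 x" using h unfolding g1_def g2_def by simp
    qed
    then show "(LINT x : ball 0 1 | lborel. radial_fun K2 (x /\<^sub>R norm x) powr q)
                   < (LINT x : ball 0 1 | lborel. radial_fun K1 (x /\<^sub>R norm x) powr q)"
      using I1 I2 by simp
  }
qed



lemma sf_bdd:
  fixes K :: "'a::euclidean_space set"
  assumes "compact K"
  shows "bdd_above ((\<lambda>x. x \<bullet> u) ` K)"
proof -
  obtain B where B: "\<forall>x\<in>K. norm x \<le> B" using compact_imp_bounded[OF assms] bounded_pos by blast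
  show ?thesis
  proof (rule bdd_aboveI2)
    fix x assume "x \<in> K"
    then have "x \<bullet> u \<le> norm x * norm u" using norm_cauchy_schwarz by blast
    also have "\<dots> \<le> B * norm u" using B \<open>x \<in> K\<close> by (intro mult_right_mono) auto
    finally show "x \<bullet> u \<le> B * norm u" .
  qed
qed

lemma sf_ge:
  fixes K :: "'a::euclidean_space set"
  assumes "compact K" "x \<in> K"
  shows "x \<bullet> u \<le> support_fun K u"
  unfolding support_fun_def by (rule cSUP_upper[OF assms(2) sf_bdd[OF assms(1)]])

lemma sf_le:
  fixes K :: "'a::euclidean_space set"
  assumes "K \<noteq> {}" "\<And>x. x \<in> K \<Longrightarrow> x \<bullet> u \<le> c"
  shows "support_fun K u \<le> c"
  unfolding support_fun_def using assms by (rule cSUP_least)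

lemma sf_mono:
  fixes K :: "'a::euclidean_space set"
  assumes "K \<noteq> {}" "K \<subseteq> L" "compact L"
  shows "support_fun K u \<le> support_fun L u"
  using assms by (intro sf_le) (auto intro: sf_ge)

lemma sf_cont:
  fixes K :: "'a::euclidean_space set"
  assumes "compact K" "K \<noteq> {}"
  shows "continuous_on A (support_fun K)"
proof -
  obtain B where B: "B > 0" "\<forall>x\<in>K. norm x \<le> B" using compact_imp_bounded[OF assms(1)] bounded_pos by blast
  have L: "support_fun K u \<le> support_fun K v + B * norm (u - v)" for u v
  proof (rule sf_le[OF assms(2)])
    fix x assume x: "x \<in> K"
    have "x \<bullet> u = x \<bullet> v + x \<bullet> (u - v)" by (simp add: inner_diff_right)
    also have "x \<bullet> (u - v) \<le> norm x * norm (u - v)" using norm_cauchy_schwarz by blast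
    also have "\<dots> \<le> B * norm (u - v)" using B x by (intro mult_right_mono) auto
    also have "x \<bullet> v \<le> support_fun K v" by (rule sf_ge[OF assms(1) x])
    finally show "x \<bullet> u \<le> support_fun K v + B * norm (u - v)" by simp
  qed
  have "B-lipschitz_on A (support_fun K)"
  proof (rule lipschitz_onI)
    fix u v assume "u \<in> A" "v \<in> A"
    show "dist (support_fun K u) (support_fun K v) \<le> B * dist u v"
      using L[of u v] L[of v u] by (simp add: dist_real_def dist_norm norm_minus_commute abs_le_iff)
  qed (use B in simp)
  then show ?thesis by (rule lipschitz_on_continuous_on)
qed



lemma F_unfold:
  "F_minf q K = real DIM('a) * (LINT x : ball 0 1 | lborel. radial_fun K (x /\<^sub>R norm x) powr q)
      / (Inf (support_fun K ` sphere (0::'a::euclidean_space) 1)) powr q"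
  unfolding F_minf_def Vq_def sphere_integral_def ..

lemma F_less:
  assumes "a < b" "t > 0"
  shows "real DIM('a::euclidean_space) * a / t powr q < real DIM('a) * b / t powr q"
  using assms by (intro divide_strict_right_mono mult_strict_left_mono) auto

lemma ball_sub:
  fixes \<Omega> :: "'a::euclidean_space set"
  assumes c: "compact \<Omega>" "convex \<Omega>" "0 \<in> \<Omega>"
    and h: "\<And>u. u \<in> sphere 0 1 \<Longrightarrow> \<rho> \<le> support_fun \<Omega> u"
  shows "cball 0 \<rho> \<subseteq> \<Omega>"
proof
  fix z assume z: "z \<in> cball (0::'a) \<rho>"
  show "z \<in> \<Omega>"
  proof (rule ccontr)
    assume "z \<notin> \<Omega>"
    then obtain a b where ab: "a \<bullet> z < b" "\<forall>x\<in>\<Omega>. a \<bullet> x > b"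
      using separating_hyperplane_closed_point[OF c(2) compact_imp_closed[OF c(1)]] by blast
    have a0: "a \<noteq> 0" using ab c(3) by force
    define u where "u = - a /\<^sub>R norm a"
    have us: "u \<in> sphere 0 1" using a0 by (simp add: u_def)
    have "support_fun \<Omega> u \<le> - b / norm a"
    proof (rule sf_le)
      show "\<Omega> \<noteq> {}" using c(3) by blast
      fix x assume "x \<in> \<Omega>"
      then have "a \<bullet> x > b" using ab by blast
      then show "x \<bullet> u \<le> - b / norm a" using a0
        by (simp add: u_def inner_commute divide_simps)
    qed
    also have "- b / norm a < z \<bullet> u" using ab(1) a0
      by (simp add: u_def inner_commute divide_simps)
    also have "z \<bullet> u \<le> norm z * norm u" using norm_cauchy_schwarz by blast
    also have "\<dots> \<le> \<rho>" using z us by simp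
    also have "\<rho> \<le> support_fun \<Omega> u" using h us by blast
    finally show False by simp
  qed
qed



theorem lemma6p2:
  fixes S :: "('a::euclidean_space \<Rightarrow> 'a) set" and \<Omega> :: "'a set" and q :: real
  assumes "DIM('a) \<ge> 2"
    and "orth_subgroup S" and "discrete_orth S" and "spanning_property S"
    and "q \<noteq> 0"
    and "\<Omega> \<in> K0 S" and "\<forall>K\<in>K0 S. F_minf q K \<le> F_minf q \<Omega>"
  shows "(q > 0 \<longrightarrow> polytope \<Omega>) \<and> (q < 0 \<longrightarrow> (\<exists>R>0. \<Omega> = cball 0 R))"
proof -
  note G = assms(2) and sp = assms(4) and max = assms(7)
  have Kc: "compact \<Omega>" "convex \<Omega>" "interior \<Omega> \<noteq> {}" "0 \<in> \<Omega>" "\<forall>\<phi>\<in>S. \<phi> ` \<Omega> = \<Omega>"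
    using assms(6) unfolding K0_def by auto
  have "0 \<in> interior \<Omega>" by (rule zero_interior[OF G sp assms(6)])
  then obtain e where e: "e > 0" "ball 0 e \<subseteq> \<Omega>" using mem_interior by blast
  obtain B where B: "B > 0" "\<forall>x\<in>\<Omega>. norm x \<le> B" using compact_imp_bounded[OF Kc(1)] bounded_pos by blast
  define \<rho> where "\<rho> = Inf (support_fun \<Omega> ` sphere 0 1)"
  have sne: "sphere (0::'a) 1 \<noteq> {}" by simp
  have hpos: "e/2 \<le> support_fun \<Omega> u" if u: "u \<in> sphere 0 1" for u
  proof -
    have "(e/2) *\<^sub>R u \<in> \<Omega>" using e u by (intro subsetD[OF e(2)]) simp
    then have "((e/2) *\<^sub>R u) \<bullet> u \<le> support_fun \<Omega> u" by (rule sf_ge[OF Kc(1)])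
    then show ?thesis using u by (simp add: dot_square_norm)
  qed
  have bddb: "bdd_below (support_fun \<Omega> ` sphere 0 1)"
    using hpos by (intro bdd_belowI2) blast
  have rle: "\<rho> \<le> support_fun \<Omega> u" if "u \<in> sphere 0 1" for u
    unfolding \<rho>_def using that bddb by (intro cInf_lower) auto
  have rge: "e/2 \<le> \<rho>" unfolding \<rho>_def using sne hpos by (intro cInf_greatest) auto
  have rpos: "\<rho> > 0" using rge e by linarith
  have Fo: "F_minf q \<Omega> = real DIM('a) * (LINT x : ball (0::'a) 1 | lborel. radial_fun \<Omega> (x /\<^sub>R norm x) powr q)
      / \<rho> powr q" unfolding F_unfold \<rho>_def ..
  have part2: "\<exists>R>0. \<Omega> = cball 0 R" if q: "q < 0"
  proof (intro exI conjI)
    show "\<rho> > 0" by (rule rpos)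
    have sub: "cball (0::'a) \<rho> \<subseteq> \<Omega>" by (rule ball_sub[OF Kc(1,2,4) rle])
    show "\<Omega> = cball (0::'a) \<rho>"
    proof (rule ccontr)
      assume ne: "\<Omega> \<noteq> cball (0::'a) \<rho>"
      have hb: "support_fun (cball (0::'a) \<rho>) u = \<rho>" if u: "u \<in> sphere 0 1" for u :: 'a
      proof (rule antisym)
        show "support_fun (cball (0::'a) \<rho>) u \<le> \<rho>"
        proof (rule sf_le)
          show "cball (0::'a) \<rho> \<noteq> {}" using rpos by simp
          fix x assume x: "x \<in> cball (0::'a) \<rho>"
          have "x \<bullet> u \<le> norm x * norm u" using norm_cauchy_schwarz by blast
          then show "x \<bullet> u \<le> \<rho>" using x u by simp
        qed
        have "(\<rho> *\<^sub>R u) \<bullet> u \<le> support_fun (cball (0::'a) \<rho>) u"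
          using u rpos by (intro sf_ge) auto
        then show "\<rho> \<le> support_fun (cball (0::'a) \<rho>) u" using u by (simp add: dot_square_norm)
      qed
      have "support_fun (cball (0::'a) \<rho>) ` sphere (0::'a) 1 = (\<lambda>_. \<rho>) ` sphere (0::'a) 1"
        by (rule image_cong) (simp_all add: hb)
      then have "Inf (support_fun (cball (0::'a) \<rho>) ` sphere (0::'a) 1) = \<rho>"
        using sne by (simp add: image_constant_conv)
      then have Fb: "F_minf q (cball (0::'a) \<rho>) = real DIM('a) *
          (LINT x : ball (0::'a) 1 | lborel. radial_fun (cball (0::'a) \<rho>) (x /\<^sub>R norm x) powr q) / \<rho> powr q"
        unfolding F_unfold by simp
      have "cball (0::'a) \<rho> \<in> K0 S"
        unfolding K0_def
      proof (intro CollectI conjI ballI)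
        show "interior (cball (0::'a) \<rho>) \<noteq> {}" using rpos by simp
        show "(0::'a) \<in> cball (0::'a) \<rho>" using rpos by simp
        fix \<phi> assume "\<phi> \<in> S"
        then have o: "orthogonal_transformation \<phi>" using G unfolding orth_subgroup_def by blast
        have "\<phi> 0 = 0" using orthogonal_transformation_linear[OF o] by (rule linear_0)
        then show "\<phi> ` cball (0::'a) \<rho> = cball (0::'a) \<rho>" using image_orthogonal_transformation_cball[OF o] by simp
      qed auto
      then have le: "F_minf q (cball (0::'a) \<rho>) \<le> F_minf q \<Omega>" using max by blast
      have "(LINT x : ball (0::'a) 1 | lborel. radial_fun \<Omega> (x /\<^sub>R norm x) powr q)
          < (LINT x : ball (0::'a) 1 | lborel. radial_fun (cball (0::'a) \<rho>) (x /\<^sub>R norm x) powr q)"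
        by (rule strict_radial(2)[OF compact_cball convex_cball Kc(1,2) rpos ball_subset_cball sub
              ne[symmetric] q])
      then have "F_minf q \<Omega> < F_minf q (cball (0::'a) \<rho>)" unfolding Fo Fb using rpos by (rule F_less)
      then show False using le by simp
    qed
  qed
  have part1: "polytope \<Omega>" if q: "q > 0"
  proof -
    have One: "\<Omega> \<noteq> {}" using Kc(4) by blast
    obtain u0 where u0: "u0 \<in> sphere (0::'a) 1" "\<forall>u\<in>sphere 0 1. support_fun \<Omega> u0 \<le> support_fun \<Omega> u"
      using continuous_attains_inf[OF compact_sphere sne sf_cont[OF Kc(1) One]] by blast
    have hu0: "support_fun \<Omega> u0 = \<rho>"
    proof (rule antisym)
      show "support_fun \<Omega> u0 \<le> \<rho>" unfolding \<rho>_def using sne u0(2) by (intro cInf_greatest) auto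
      show "\<rho> \<le> support_fun \<Omega> u0" by (rule rle[OF u0(1)])
    qed
    have idS: "id \<in> S" using G unfolding orth_subgroup_def by blast
    have oS: "orthogonal_transformation \<psi>" if "\<psi> \<in> S" for \<psi> using G that unfolding orth_subgroup_def by blast
    have invS: "inv \<psi> \<in> S" if "\<psi> \<in> S" for \<psi> using G that unfolding orth_subgroup_def by blast
    have compS: "\<phi> \<circ> \<psi> \<in> S" if "\<phi> \<in> S" "\<psi> \<in> S" for \<phi> \<psi> using G that unfolding orth_subgroup_def by blast
    define P where "P = {x. \<forall>\<psi>\<in>S. x \<bullet> \<psi> u0 \<le> \<rho> \<and> (\<forall>b\<in>Basis. \<bar>x \<bullet> \<psi> b\<bar> \<le> B)}"
    have \<Omega>P: "\<Omega> \<subseteq> P"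
    proof
      fix x assume x: "x \<in> \<Omega>"
      have "x \<bullet> \<psi> u0 \<le> \<rho> \<and> (\<forall>b\<in>Basis. \<bar>x \<bullet> \<psi> b\<bar> \<le> B)" if ps: "\<psi> \<in> S" for \<psi>
      proof (intro conjI ballI)
        have "inv \<psi> x \<in> \<Omega>" using Kc(5) invS[OF ps] x by blast
        then have "(inv \<psi> x) \<bullet> u0 \<le> support_fun \<Omega> u0" by (rule sf_ge[OF Kc(1)])
        moreover have "x \<bullet> \<psi> u0 = (inv \<psi> x) \<bullet> u0"
          using orth_inner[OF oS[OF ps], of u0 x] by (simp add: inner_commute)
        ultimately show "x \<bullet> \<psi> u0 \<le> \<rho>" using hu0 by simp
        fix b :: 'a assume b: "b \<in> Basis"
        have "\<bar>x \<bullet> \<psi> b\<bar> \<le> norm x * norm (\<psi> b)" by (rule Cauchy_Schwarz_ineq2)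
        also have "norm (\<psi> b) = 1" using orthogonal_transformation_norm[OF oS[OF ps]] b by simp
        finally show "\<bar>x \<bullet> \<psi> b\<bar> \<le> B" using B x by auto
      qed
      then show "x \<in> P" unfolding P_def by blast
    qed
    have Pinv: "\<psi> x \<in> P" if ps: "\<psi> \<in> S" and x: "x \<in> P" for \<psi> x
    proof -
      have "\<psi> x \<bullet> \<phi> u0 \<le> \<rho> \<and> (\<forall>b\<in>Basis. \<bar>\<psi> x \<bullet> \<phi> b\<bar> \<le> B)" if ph: "\<phi> \<in> S" for \<phi>
      proof -
        have c: "inv \<psi> \<circ> \<phi> \<in> S" by (rule compS[OF invS[OF ps] ph])
        have "\<psi> x \<bullet> \<phi> v = x \<bullet> (inv \<psi> \<circ> \<phi>) v" for v
          using orth_inner[OF oS[OF ps]] by simp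
        moreover have "x \<bullet> (inv \<psi> \<circ> \<phi>) u0 \<le> \<rho> \<and> (\<forall>b\<in>Basis. \<bar>x \<bullet> (inv \<psi> \<circ> \<phi>) b\<bar> \<le> B)"
          using x c unfolding P_def by blast
        ultimately show ?thesis by simp
      qed
      then show ?thesis unfolding P_def by blast
    qed
    have Pinv': "\<psi> ` P = P" if ps: "\<psi> \<in> S" for \<psi>
    proof
      show "\<psi> ` P \<subseteq> P" using Pinv ps by blast
      show "P \<subseteq> \<psi> ` P"
      proof
        fix x assume "x \<in> P"
        then have "inv \<psi> x \<in> P" using Pinv invS ps by blast
        moreover have "\<psi> (inv \<psi> x) = x"
          using orthogonal_transformation_surj[OF oS[OF ps]] by (simp add: surj_f_inv_f)
        ultimately show "x \<in> \<psi> ` P" by (metis imageI)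
      qed
    qed
    have Pbdd: "bounded P" unfolding bounded_iff
    proof (intro exI ballI)
      fix x assume x: "x \<in> P"
      have "norm x \<le> (\<Sum>b\<in>Basis. \<bar>x \<bullet> b\<bar>)" by (rule norm_le_l1)
      also have "\<dots> \<le> of_nat (card (Basis::'a set)) * B"
        using x idS unfolding P_def by (intro sum_bounded_above) auto
      finally show "norm x \<le> of_nat (card (Basis::'a set)) * B" .
    qed
    define Wu where "Wu = (\<lambda>\<psi>. \<psi> u0) ` S"
    define Wb where "Wb = (\<Union>b\<in>(Basis::'a set). (\<lambda>\<psi>. \<psi> b) ` S)"
    have fWu: "finite Wu" unfolding Wu_def by (rule orbit_finite[OF G sp u0(1)])
    have fWb: "finite Wb" unfolding Wb_def
      by (intro finite_UN_I finite_Basis orbit_finite[OF G sp]) simp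
    have Peq: "P = (\<Inter>w\<in>Wu. {x. w \<bullet> x \<le> \<rho>}) \<inter> (\<Inter>w\<in>Wb \<union> uminus ` Wb. {x. w \<bullet> x \<le> B})"
    proof (intro set_eqI iffI)
      fix x assume "x \<in> P"
      then show "x \<in> (\<Inter>w\<in>Wu. {x. w \<bullet> x \<le> \<rho>}) \<inter> (\<Inter>w\<in>Wb \<union> uminus ` Wb. {x. w \<bullet> x \<le> B})"
        unfolding P_def Wu_def Wb_def by (force simp: abs_le_iff inner_commute)
    next
      fix x assume h: "x \<in> (\<Inter>w\<in>Wu. {x. w \<bullet> x \<le> \<rho>}) \<inter> (\<Inter>w\<in>Wb \<union> uminus ` Wb. {x. w \<bullet> x \<le> B})"
      show "x \<in> P" unfolding P_def
      proof (intro CollectI ballI conjI)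
        fix \<psi> assume ps: "\<psi> \<in> S"
        then have "\<psi> u0 \<in> Wu" by (simp add: Wu_def)
        then show "x \<bullet> \<psi> u0 \<le> \<rho>" using h by (auto simp: inner_commute)
        fix b :: 'a assume b: "b \<in> Basis"
        have w: "\<psi> b \<in> Wb" using ps b by (auto simp: Wb_def)
        then have "\<psi> b \<bullet> x \<le> B" "(- \<psi> b) \<bullet> x \<le> B" using h by blast+
        then show "\<bar>x \<bullet> \<psi> b\<bar> \<le> B" by (simp add: abs_le_iff inner_commute)
      qed
    qed
    have pI: "polyhedron (\<Inter>w\<in>W. {x. w \<bullet> x \<le> c})" if "finite W" for W :: "'a set" and c
      using that by (intro polyhedron_Inter) (auto simp: polyhedron_halfspace_le)
    have Ppoly: "polyhedron P"
      unfolding Peq using fWu fWb by (intro polyhedron_Int pI) auto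
    have cP: "compact P" using Pbdd polyhedron_imp_closed[OF Ppoly] by (simp add: compact_eq_bounded_closed)
    have vP: "convex P" by (rule polyhedron_imp_convex[OF Ppoly])
    have PK: "P \<in> K0 S" unfolding K0_def
      using cP vP interior_mono[OF \<Omega>P] Kc(3,4) \<Omega>P Pinv' by blast
    have PnE: "P \<noteq> {}" using \<Omega>P One by blast
    have hP: "\<rho> \<le> support_fun P u" if "u \<in> sphere 0 1" for u :: 'a
      using rle[OF that] sf_mono[OF One \<Omega>P cP, of u] by linarith
    have hPu0: "support_fun P u0 \<le> \<rho>"
    proof (rule sf_le[OF PnE])
      fix x assume "x \<in> P"
      then show "x \<bullet> u0 \<le> \<rho>" using idS unfolding P_def by fastforce
    qed
    have infP: "Inf (support_fun P ` sphere (0::'a) 1) = \<rho>"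
    proof (rule antisym)
      have "bdd_below (support_fun P ` sphere (0::'a) 1)" using hP by (intro bdd_belowI2) blast
      then have "Inf (support_fun P ` sphere (0::'a) 1) \<le> support_fun P u0" using u0(1) by (intro cInf_lower) auto
      then show "Inf (support_fun P ` sphere (0::'a) 1) \<le> \<rho>" using hPu0 by linarith
      show "\<rho> \<le> Inf (support_fun P ` sphere (0::'a) 1)" using sne hP by (intro cInf_greatest) auto
    qed
    have "\<Omega> = P"
    proof (rule ccontr)
      assume ne: "\<Omega> \<noteq> P"
      have "(LINT x : ball (0::'a) 1 | lborel. radial_fun \<Omega> (x /\<^sub>R norm x) powr q)
          < (LINT x : ball (0::'a) 1 | lborel. radial_fun P (x /\<^sub>R norm x) powr q)"
        by (rule strict_radial(1)[OF Kc(1,2) cP vP e \<Omega>P ne q])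
      then have "F_minf q \<Omega> < F_minf q P" unfolding Fo F_unfold[of q P] infP using rpos by (rule F_less)
      then show False using max PK by fastforce
    qed
    then show ?thesis using Ppoly Pbdd by (simp add: polytope_eq_bounded_polyhedron)
  qed
  show ?thesis using part1 part2 by blast
qed

end
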